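(* Let $\mathcal P$ be a set of pre-tangles in a graph $G$, let $N$ be a nested set of $\mathcal P$-relevant proper separations of $G$ which efficiently distinguishes $\mathcal P$, and let $(\vec s_i)_{i\in\mathbb N}$ be a strictly increasing sequence of orientations of separations in $N$. If the orders $|s_i|$ are strictly increasing, then there is a strictly increasing sequence $(\vec s_i')_{i\in\mathbb N}$ of orientations of separations in $N$ which contains $(\vec s_i)_i$ as a subsequence and is strongly $\mathcal P$-relevant.
   Context: Notation: $s$ denotes a separation (an unordered pair $\{A,B\}$ of subsets of $V(G)$ with $A\cup B=V(G)$ and no edge between $A\setminus B$ and $B\setminus A$; order $|s|=|A\cap B|$; proper if $A\ne V(G)\ne B$), $\vec s,\overleftarrow{s}$ its two orientations; oriented separations are ordered by $(A,B)\le(C,D)$ iff $A\subseteq C$ and $B\supseteq D$. Nested: some orientations comparable. A set $O$ of oriented separations is consistent if there are no $(A,B),(C,D)\in O$ with $\{A,B\}\ne\{C,D\}$ and $(B,A)\le(C,D)$. A pre-tangle is a consistent set $P$ which, for some $k\in\mathbb N\cup\{\aleph_0\}$, contains exactly one orientation of every separation of order $<k$ and nothing else. A separation distinguishes two pre-tangles if both contain an orientation of it but different ones; efficiently if of minimum order among such. $N$ efficiently distinguishes $\mathcal P$ if any two pre-tangles in $\mathcal P$ distinguished by some separation are efficiently distinguished by an element of $N$. A separation is $\mathcal P$-relevant if it efficiently distinguishes some two pre-tangles in $\mathcal P$. A pair $\vec s<\vec t$ is strongly $\mathcal P$-relevant if there are $O,P,Q\in\mathcal P$ such that $s$ efficiently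 distinguishes $O$ and $P$ with $\vec s\in P$, and $t$ efficiently distinguishes $P$ and $Q$ with $\overleftarrow{t}\in P$; a strictly increasing sequence is strongly $\mathcal P$-relevant if all consecutive pairs are. *)

theory Defs
  imports Main "HOL-Library.Extended_Nat"
begin

definition graph :: "'a set \<Rightarrow> ('a \<Rightarrow> 'a \<Rightarrow> bool) \<Rightarrow> bool" where
  "graph V E \<longleftrightarrow> (\<forall>x y. E x y \<longrightarrow> x \<in> V \<and> y \<in> V \<and> E y x \<and> x \<noteq> y)"

definition ecard :: "'a set \<Rightarrow> enat" where
  "ecard X = (if finite X then enat (card X) else \<infinity>)"

type_synonym 'a osep = "'a set \<times> 'a set"

definition is_osep :: "'a set \<Rightarrow> ('a \<Rightarrow> 'a \<Rightarrow> bool) \<Rightarrow> 'a osep \<Rightarrow> bool" where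
  "is_osep V E p \<longleftrightarrow> fst p \<union> snd p = V \<and>
     (\<forall>x \<in> fst p - snd p. \<forall>y \<in> snd p - fst p. \<not> E x y)"

definition oinv :: "'a osep \<Rightarrow> 'a osep" where
  "oinv p = (snd p, fst p)"

text \<open>The unordered separation {A,B}, represented as the set of its two orientations.\<close>
definition usep :: "'a osep \<Rightarrow> 'a osep set" where
  "usep p = {p, oinv p}"

definition is_sep :: "'a set \<Rightarrow> ('a \<Rightarrow> 'a \<Rightarrow> bool) \<Rightarrow> 'a osep set \<Rightarrow> bool" where
  "is_sep V E s \<longleftrightarrow> (\<exists>p. s = usep p \<and> is_osep V E p)"

definition oord :: "'a osep \<Rightarrow> enat" where
  "oord p = ecard (fst p \<inter> snd p)"

text \<open>Order of a separation (independent of the chosen orientation).\<close>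
definition sord :: "'a osep set \<Rightarrow> enat" where
  "sord s = oord (SOME p. p \<in> s)"

definition proper_sep :: "'a set \<Rightarrow> ('a \<Rightarrow> 'a \<Rightarrow> bool) \<Rightarrow> 'a osep set \<Rightarrow> bool" where
  "proper_sep V E s \<longleftrightarrow> is_sep V E s \<and> (\<forall>p\<in>s. fst p \<noteq> V \<and> snd p \<noteq> V)"

definition oleq :: "'a osep \<Rightarrow> 'a osep \<Rightarrow> bool" where
  "oleq p q \<longleftrightarrow> fst p \<subseteq> fst q \<and> snd q \<subseteq> snd p"

definition olt :: "'a osep \<Rightarrow> 'a osep \<Rightarrow> bool" where
  "olt p q \<longleftrightarrow> oleq p q \<and> p \<noteq> q"

definition nested :: "'a osep set \<Rightarrow> 'a osep set \<Rightarrow> bool" where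
  "nested s t \<longleftrightarrow> (\<exists>p\<in>s. \<exists>q\<in>t. oleq p q \<or> oleq q p)"

definition consistent :: "'a osep set \<Rightarrow> bool" where
  "consistent X \<longleftrightarrow> \<not> (\<exists>p\<in>X. \<exists>q\<in>X. usep p \<noteq> usep q \<and> oleq (oinv p) q)"

definition pretangle :: "'a set \<Rightarrow> ('a \<Rightarrow> 'a \<Rightarrow> bool) \<Rightarrow> 'a osep set \<Rightarrow> bool" where
  "pretangle V E P \<longleftrightarrow> consistent P \<and>
     (\<exists>k::enat.
        (\<forall>s. is_sep V E s \<and> sord s < k \<longrightarrow> (\<exists>!p. p \<in> s \<inter> P)) \<and>
        (\<forall>p\<in>P. is_sep V E (usep p) \<and> oord p < k))"

definition distinguishes :: "'a osep set \<Rightarrow> 'a osep set \<Rightarrow> 'a osep set \<Rightarrow> bool" where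
  "distinguishes s P Q \<longleftrightarrow> (\<exists>p q. p \<in> s \<inter> P \<and> q \<in> s \<inter> Q \<and> p \<noteq> q)"

definition eff_distinguishes ::
  "'a set \<Rightarrow> ('a \<Rightarrow> 'a \<Rightarrow> bool) \<Rightarrow> 'a osep set \<Rightarrow> 'a osep set \<Rightarrow> 'a osep set \<Rightarrow> bool" where
  "eff_distinguishes V E s P Q \<longleftrightarrow> is_sep V E s \<and> distinguishes s P Q \<and>
     (\<forall>t. is_sep V E t \<and> distinguishes t P Q \<longrightarrow> sord s \<le> sord t)"

definition set_eff_distinguishes ::
  "'a set \<Rightarrow> ('a \<Rightarrow> 'a \<Rightarrow> bool) \<Rightarrow> 'a osep set set \<Rightarrow> 'a osep set set \<Rightarrow> bool" where
  "set_eff_distinguishes V E N \<P> \<longleftrightarrow> (\<forall>P\<in>\<P>. \<forall>Q\<in>\<P>.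
     (\<exists>s. is_sep V E s \<and> distinguishes s P Q) \<longrightarrow> (\<exists>s\<in>N. eff_distinguishes V E s P Q))"

definition relevant ::
  "'a set \<Rightarrow> ('a \<Rightarrow> 'a \<Rightarrow> bool) \<Rightarrow> 'a osep set set \<Rightarrow> 'a osep set \<Rightarrow> bool" where
  "relevant V E \<P> s \<longleftrightarrow> (\<exists>P\<in>\<P>. \<exists>Q\<in>\<P>. eff_distinguishes V E s P Q)"

definition strongly_relevant ::
  "'a set \<Rightarrow> ('a \<Rightarrow> 'a \<Rightarrow> bool) \<Rightarrow> 'a osep set set \<Rightarrow> 'a osep \<Rightarrow> 'a osep \<Rightarrow> bool" where
  "strongly_relevant V E \<P> p q \<longleftrightarrow> olt p q \<and> (\<exists>R\<in>\<P>. \<exists>P\<in>\<P>. \<exists>Q\<in>\<P>.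
     eff_distinguishes V E (usep p) R P \<and> p \<in> P \<and>
     eff_distinguishes V E (usep q) P Q \<and> oinv q \<in> P)"

end

theory Submission imports Defs begin
lemma oinv_oinv[simp]: "oinv (oinv p) = p" by (simp add: oinv_def)
lemma usep_oinv[simp]: "usep (oinv p) = usep p" by (auto simp: usep_def)
lemma oleq_oinv[simp]: "oleq (oinv p) (oinv q) = oleq q p" by (auto simp: oleq_def oinv_def)
lemma oleq_oinv2: "oleq p (oinv q) = oleq q (oinv p)" by (auto simp: oleq_def oinv_def)
lemma nested_cases: "nested (usep a) (usep c) \<Longrightarrow>
  oleq a c \<or> oleq c a \<or> oleq a (oinv c) \<or> oleq (oinv c) a \<or> oleq (oinv a) c \<or> oleq c (oinv a)
  \<or> oleq (oinv a) (oinv c) \<or> oleq (oinv c) (oinv a)"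
  unfolding nested_def usep_def by blast
lemma oord_oinv[simp]: "oord (oinv p) = oord p" by (simp add: oord_def oinv_def Int_commute)
lemma in_usep: "q \<in> usep p \<longleftrightarrow> q = p \<or> q = oinv p" by (auto simp: usep_def)
lemma sord_usep[simp]: "sord (usep p) = oord p"
proof -
  have "(SOME q. q \<in> usep p) \<in> usep p" by (rule someI[of _ p]) (simp add: usep_def)
  then show ?thesis unfolding sord_def by (auto simp: usep_def)
qed
lemma usep_eq_oord: "usep p = usep q \<Longrightarrow> oord p = oord q"
proof -
  assume h: "usep p = usep q"
  have "q \<in> usep p" using h by (simp add: usep_def)
  then show ?thesis by (auto simp: in_usep)
qed
lemma is_sep_usep: "is_sep V E t \<Longrightarrow> a \<in> t \<Longrightarrow> t = usep a"
  unfolding is_sep_def by (auto simp: in_usep)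
lemma is_sep_union: "is_sep V E (usep a) \<Longrightarrow> fst a \<union> snd a = V"
proof -
  assume "is_sep V E (usep a)"
  then obtain p where p: "usep a = usep p" "is_osep V E p" unfolding is_sep_def by blast
  have "a \<in> usep p" using p(1) by (metis insertI1 usep_def)
  then show ?thesis using p(2) by (auto simp: in_usep is_osep_def oinv_def)
qed
lemma proper_fst: "proper_sep V E (usep a) \<Longrightarrow> fst a \<noteq> V"
  unfolding proper_sep_def usep_def by auto
lemma proper_snd: "proper_sep V E (usep a) \<Longrightarrow> snd a \<noteq> V"
  unfolding proper_sep_def usep_def by auto
lemma proper_neq: "proper_sep V E (usep a) \<Longrightarrow> a \<noteq> oinv a"
proof
  assume h: "proper_sep V E (usep a)" "a = oinv a"
  then have "fst a \<union> snd a = V" using is_sep_union proper_sep_def by blast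
  moreover have "fst a = snd a" using h(2) by (metis fst_conv oinv_def)
  ultimately show False using proper_fst[OF h(1)] by auto
qed
lemma dist_intro: "a \<in> X \<Longrightarrow> oinv a \<in> Y \<Longrightarrow> a \<noteq> oinv a \<Longrightarrow> distinguishes (usep a) X Y"
  unfolding distinguishes_def usep_def by blast
lemma eff_sym: "eff_distinguishes V E u P Q \<Longrightarrow> eff_distinguishes V E u Q P"
  unfolding eff_distinguishes_def distinguishes_def by blast
lemma eff_orient: "eff_distinguishes V E u P Q \<Longrightarrow> a \<in> u \<Longrightarrow>
   (oinv a \<in> P \<and> a \<in> Q) \<or> (a \<in> P \<and> oinv a \<in> Q)"
proof -
  assume h: "eff_distinguishes V E u P Q" "a \<in> u"
  then have u: "u = usep a" using is_sep_usep eff_distinguishes_def by metis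
  from h(1) obtain p q where "p \<in> u \<inter> P" "q \<in> u \<inter> Q" "p \<noteq> q"
    unfolding eff_distinguishes_def distinguishes_def by blast
  then have "p \<in> usep a" "q \<in> usep a" "p \<in> P" "q \<in> Q" "p \<noteq> q" unfolding u by auto
  then show ?thesis unfolding in_usep by auto
qed
lemma eff_min: "eff_distinguishes V E u P Q \<Longrightarrow> is_sep V E w \<Longrightarrow> distinguishes w P Q \<Longrightarrow> sord u \<le> sord w"
  unfolding eff_distinguishes_def by blast
lemma pre_orient: "pretangle V E X \<Longrightarrow> q \<in> X \<Longrightarrow> is_sep V E w \<Longrightarrow> sord w < oord q \<Longrightarrow> \<exists>x\<in>w. x \<in> X"
proof -
  assume h: "pretangle V E X" "q \<in> X" "is_sep V E w" "sord w < oord q"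
  then obtain k where k: "\<forall>s. is_sep V E s \<and> sord s < k \<longrightarrow> (\<exists>!p. p \<in> s \<inter> X)"
     "\<forall>p\<in>X. is_sep V E (usep p) \<and> oord p < k" unfolding pretangle_def by blast
  have "sord w < k" using h k(2) order.strict_trans by blast
  then show ?thesis using k(1) h(3) by blast
qed
lemma pre_cons: "pretangle V E X \<Longrightarrow> p \<in> X \<Longrightarrow> q \<in> X \<Longrightarrow> oleq (oinv p) q \<Longrightarrow> oord p = oord q"
proof -
  assume h: "pretangle V E X" "p \<in> X" "q \<in> X" "oleq (oinv p) q"
  then have "usep p = usep q" unfolding pretangle_def consistent_def by blast
  then show ?thesis by (rule usep_eq_oord)
qed

lemma sr_intro: "oleq p q \<Longrightarrow> p \<noteq> q \<Longrightarrow> R \<in> \<P> \<Longrightarrow> P \<in> \<P> \<Longrightarrow> Q \<in> \<P> \<Longrightarrow>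
  eff_distinguishes V E (usep p) R P \<Longrightarrow> p \<in> P \<Longrightarrow> eff_distinguishes V E (usep q) P Q \<Longrightarrow>
  oinv q \<in> P \<Longrightarrow> strongly_relevant V E \<P> p q"
  unfolding strongly_relevant_def olt_def by blast

lemma key:
  assumes pre: "\<forall>P\<in>\<P>. pretangle V E P"
    and NN: "\<forall>t\<in>N. proper_sep V E t \<and> relevant V E \<P> t"
    and nest: "\<forall>t\<in>N. \<forall>u\<in>N. nested t u"
    and eff: "set_eff_distinguishes V E N \<P>"
    and a: "a \<in> \<Union>N" and b: "b \<in> \<Union>N" and ab: "olt a b" and oab: "oord a < oord b"
  shows "strongly_relevant V E \<P> a b \<or>
     (\<exists>x\<in>\<Union>N. strongly_relevant V E \<P> a x \<and> strongly_relevant V E \<P> x b)"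
proof -
  from a obtain ta where ta: "ta \<in> N" "a \<in> ta" by blast
  from b obtain tb where tb: "tb \<in> N" "b \<in> tb" by blast
  have "is_sep V E ta" using ta NN unfolding proper_sep_def by blast
  then have "ta = usep a" using ta(2) by (rule is_sep_usep)
  then have aN: "usep a \<in> N" using ta(1) by simp
  have "is_sep V E tb" using tb NN unfolding proper_sep_def by blast
  then have "tb = usep b" using tb(2) by (rule is_sep_usep)
  then have bN: "usep b \<in> N" using tb(1) by simp
  have pa: "proper_sep V E (usep a)" and ra: "relevant V E \<P> (usep a)" using aN NN by auto
  have pb: "proper_sep V E (usep b)" and rb: "relevant V E \<P> (usep b)" using bN NN by auto
  have sa: "is_sep V E (usep a)" and sb: "is_sep V E (usep b)" using pa pb proper_sep_def by auto
  have ana: "a \<noteq> oinv a" using pa proper_neq by blast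
  have bnb: "b \<noteq> oinv b" using pb proper_neq by blast
  have unb: "fst b \<union> snd b = V" using sb is_sep_union by blast
  have una: "fst a \<union> snd a = V" using sa is_sep_union by blast
  have snda: "snd a \<noteq> V" using pa proper_snd by blast
  from rb obtain P0 Q0 where PQ0: "P0 \<in> \<P>" "Q0 \<in> \<P>" "eff_distinguishes V E (usep b) P0 Q0"
    unfolding relevant_def by blast
  obtain P Q where PQ: "P \<in> \<P>" "Q \<in> \<P>" "eff_distinguishes V E (usep b) P Q" "oinv b \<in> P" "b \<in> Q"
  proof -
    have "b \<in> usep b" by (simp add: usep_def)
    from eff_orient[OF PQ0(3) this] PQ0 eff_sym that show thesis by blast
  qed
  have preP: "pretangle V E P" and preQ: "pretangle V E Q" using PQ pre by auto
  have "\<exists>x\<in>usep a. x \<in> P" using pre_orient[OF preP PQ(4) sa] oab by simp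
  then have aP': "a \<in> P \<or> oinv a \<in> P" by (auto simp: usep_def)
  have "\<exists>x\<in>usep a. x \<in> Q" using pre_orient[OF preQ PQ(5) sa] oab by simp
  then have aQ': "a \<in> Q \<or> oinv a \<in> Q" by (auto simp: usep_def)
  have aQ: "a \<in> Q"
  proof (rule ccontr)
    assume "a \<notin> Q"
    then have "oinv a \<in> Q" using aQ' by blast
    moreover have "oleq (oinv (oinv a)) b" using ab unfolding olt_def by simp
    ultimately have "oord (oinv a) = oord b" using pre_cons[OF preQ _ PQ(5)] by blast
    then show False using oab by simp
  qed
  have aP: "a \<in> P"
  proof (rule ccontr)
    assume "a \<notin> P"
    then have "oinv a \<in> P" using aP' by blast
    then have "distinguishes (usep a) Q P" using dist_intro aQ ana by blast
    then have "distinguishes (usep a) P Q" unfolding distinguishes_def by blast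
    then have "oord b \<le> oord a" using eff_min[OF PQ(3) sa] by simp
    then show False using oab by simp
  qed
  from ra obtain O0 Q0' where OQ0: "O0 \<in> \<P>" "Q0' \<in> \<P>" "eff_distinguishes V E (usep a) O0 Q0'"
    unfolding relevant_def by blast
  obtain Ro Q' where OQ: "Ro \<in> \<P>" "Q' \<in> \<P>" "eff_distinguishes V E (usep a) Ro Q'" "oinv a \<in> Ro" "a \<in> Q'"
  proof -
    have "a \<in> usep a" by (simp add: usep_def)
    from eff_orient[OF OQ0(3) this] OQ0 eff_sym that show thesis by blast
  qed
  have preO: "pretangle V E Ro" and preQ': "pretangle V E Q'" using OQ pre by auto
  show ?thesis
  proof (cases "eff_distinguishes V E (usep a) Ro P")
    case True
    then have "strongly_relevant V E \<P> a b"
      using sr_intro[OF _ _ OQ(1) PQ(1) PQ(2) True aP PQ(3) PQ(4)] ab unfolding olt_def by blast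
    then show ?thesis by blast
  next
    case False
    have dOP: "distinguishes (usep a) P Ro" using dist_intro aP OQ(4) ana by blast
    then have "distinguishes (usep a) Ro P" unfolding distinguishes_def by blast
    then obtain r where r: "r \<in> N" "eff_distinguishes V E r Ro P"
      using eff OQ(1) PQ(1) sa unfolding set_eff_distinguishes_def by blast
    have sr: "is_sep V E r" using r eff_distinguishes_def by blast
    then obtain r0 where "r0 \<in> r" unfolding is_sep_def usep_def by blast
    obtain c where c: "c \<in> r" "oinv c \<in> Ro" "c \<in> P"
    proof -
      have r0: "r = usep r0" using is_sep_usep[OF sr \<open>r0 \<in> r\<close>] .
      have i1: "r0 \<in> r" "oinv r0 \<in> r" unfolding r0 usep_def by auto
      from eff_orient[OF r(2) \<open>r0 \<in> r\<close>] show thesis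
      proof
        assume "oinv r0 \<in> Ro \<and> r0 \<in> P" then show thesis using that[of r0] i1 by blast
      next
        assume "r0 \<in> Ro \<and> oinv r0 \<in> P" then show thesis using that[of "oinv r0"] i1 by simp
      qed
    qed
    have rc: "r = usep c" using is_sep_usep[OF sr c(1)] .
    have pc: "proper_sep V E (usep c)" using r(1) NN rc by auto
    have cnc: "c \<noteq> oinv c" using pc proper_neq by blast
    have sc: "is_sep V E (usep c)" using sr rc by simp
    have "oord c \<le> oord a" using eff_min[OF r(2) sa] \<open>distinguishes (usep a) Ro P\<close> rc by simp
    moreover have "oord c \<noteq> oord a"
    proof
      assume h: "oord c = oord a"
      have "eff_distinguishes V E (usep a) Ro P"
        unfolding eff_distinguishes_def using sa \<open>distinguishes (usep a) Ro P\<close>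
          eff_min[OF r(2)] h rc by auto
      then show False using False by blast
    qed
    ultimately have oca: "oord c < oord a" by simp
    have "\<exists>x\<in>usep c. x \<in> Q'" using pre_orient[OF preQ' OQ(5) sc] oca by simp
    then have cQ'': "c \<in> Q' \<or> oinv c \<in> Q'" by (auto simp: usep_def)
    have cQ': "oinv c \<in> Q'"
    proof (rule ccontr)
      assume "oinv c \<notin> Q'"
      then have "c \<in> Q'" using cQ'' by blast
      then have "distinguishes (usep c) Q' Ro" using dist_intro c cnc by blast
      then have "distinguishes (usep c) Ro Q'" unfolding distinguishes_def by blast
      then have "oord a \<le> oord c" using eff_min[OF OQ(3) sc] by simp
      then show False using oca by simp
    qed
    have "\<exists>x\<in>usep c. x \<in> Q" using pre_orient[OF preQ PQ(5) sc] oca oab by simp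
    then have cQ2: "c \<in> Q \<or> oinv c \<in> Q" by (auto simp: usep_def)
    have cQ: "c \<in> Q"
    proof (rule ccontr)
      assume "c \<notin> Q"
      then have "oinv c \<in> Q" using cQ2 by blast
      then have "distinguishes (usep c) P Q" using dist_intro c cnc by blast
      then have "oord b \<le> oord c" using eff_min[OF PQ(3) sc] by simp
      then show False using oca oab by simp
    qed
    have n1: "\<not> oleq (oinv c) a" "\<not> oleq (oinv a) c"
      using pre_cons[OF preP c(3) aP] pre_cons[OF preP aP c(3)] oca by auto
    have n2: "\<not> oleq a (oinv c)" "\<not> oleq c (oinv a)"
      using pre_cons[OF preO OQ(4) c(2)] pre_cons[OF preO c(2) OQ(4)] oca by auto
    have n3: "\<not> oleq (oinv a) (oinv c)" "\<not> oleq c a"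
      using pre_cons[OF preQ' OQ(5) cQ'] pre_cons[OF preQ' cQ' OQ(5)] oca by auto
    have "nested (usep a) (usep c)" using nest aN r(1) rc by blast
    then have ac: "oleq a c"
      using n1 n2 n3 nested_cases[of a c] by simp
    have m1: "\<not> oleq b c"
      using pre_cons[OF preP PQ(4) c(3)] oab oca by auto
    have m2: "\<not> oleq (oinv b) c" "\<not> oleq (oinv c) b"
      using pre_cons[OF preQ PQ(5) cQ] pre_cons[OF preQ cQ PQ(5)] oab oca by auto
    have m3: "\<not> oleq c (oinv b)"
    proof
      assume "oleq c (oinv b)"
      then have "fst a \<subseteq> snd b" "fst b \<subseteq> snd a" using ac unfolding oleq_def oinv_def by auto
      moreover have "snd b \<subseteq> snd a" using ab unfolding olt_def oleq_def by auto
      ultimately have "snd a = V" using unb una by auto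
      then show False using snda by simp
    qed
    have "nested (usep c) (usep b)" using nest bN r(1) rc by blast
    moreover have "\<not> oleq b (oinv c)" using m3 oleq_oinv2 by metis
    ultimately have cb: "oleq c b"
      using m1 m2 m3 nested_cases[of c b] by simp
    have cneb: "c \<noteq> b" using oca oab by auto
    have anec: "a \<noteq> c" using oca by auto
    have src: "strongly_relevant V E \<P> c b"
      using sr_intro[OF cb cneb OQ(1) PQ(1) PQ(2) _ c(3) PQ(3) PQ(4)] r(2) rc by simp
    have effc: "eff_distinguishes V E (usep c) Q' P"
      unfolding eff_distinguishes_def
    proof (intro conjI allI impI)
      show "is_sep V E (usep c)" by (rule sc)
      have "distinguishes (usep (oinv c)) Q' P" using dist_intro[of "oinv c" Q' P] cQ' c(3) cnc by auto
      then show "distinguishes (usep c) Q' P" by simp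
      fix w assume w: "is_sep V E w \<and> distinguishes w Q' P"
      show "sord (usep c) \<le> sord w"
      proof (rule ccontr)
        assume "\<not> sord (usep c) \<le> sord w"
        then have wc: "sord w < oord c" by simp
        have wa: "sord w < oord (oinv a)" using order.strict_trans[OF wc oca] by simp
        obtain z where z: "z \<in> w" "z \<in> Ro" using pre_orient[OF preO OQ(4) _ wa] w by blast
        from w obtain p q where pq: "p \<in> w \<inter> Q'" "q \<in> w \<inter> P" "p \<noteq> q"
          unfolding distinguishes_def by blast
        have "\<not> distinguishes w Ro P"
        proof
          assume "distinguishes w Ro P"
          then have "sord r \<le> sord w" using eff_min[OF r(2)] w by blast
          then show False using wc rc by simp
        qed
        then have "z = q"
        proof (rule contrapos_np)
          assume "z \<noteq> q" then show "distinguishes w Ro P" unfolding distinguishes_def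
            using z pq by (intro exI[of _ z] exI[of _ q]) simp
        qed
        have "\<not> distinguishes w Ro Q'"
        proof
          assume "distinguishes w Ro Q'"
          then have "sord (usep a) \<le> sord w" using eff_min[OF OQ(3)] w by blast
          then show False using wa by simp
        qed
        then have "z = p"
        proof (rule contrapos_np)
          assume "z \<noteq> p" then show "distinguishes w Ro Q'" unfolding distinguishes_def
            using z pq by (intro exI[of _ z] exI[of _ p]) simp
        qed
        then show False using \<open>z = q\<close> pq by simp
      qed
    qed
    have sra: "strongly_relevant V E \<P> a c"
      using sr_intro[OF ac anec OQ(1) OQ(2) PQ(1) OQ(3) OQ(5) effc cQ'] .
    have "c \<in> \<Union>N" using c(1) r(1) by blast
    then show ?thesis using sra src by blast
  qed
qed

theorem mainTheorem15:
  fixes V :: "'a set" and E :: "'a \<Rightarrow> 'a \<Rightarrow> bool"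
    and \<P> :: "'a osep set set" and N :: "'a osep set set"
    and s :: "nat \<Rightarrow> 'a osep"
  assumes "graph V E"
    and "\<forall>P\<in>\<P>. pretangle V E P"
    and "\<forall>t\<in>N. proper_sep V E t \<and> relevant V E \<P> t"
    and "\<forall>t\<in>N. \<forall>u\<in>N. nested t u"
    and "set_eff_distinguishes V E N \<P>"
    and "\<forall>i. s i \<in> \<Union>N"
    and "\<forall>i. olt (s i) (s (Suc i))"
    and "\<forall>i. oord (s i) < oord (s (Suc i))"
  shows "\<exists>s' :: nat \<Rightarrow> 'a osep. (\<forall>i. s' i \<in> \<Union>N) \<and> (\<forall>i. olt (s' i) (s' (Suc i))) \<and>
           (\<exists>f. strict_mono f \<and> (\<forall>i. s' (f i) = s i)) \<and>
           (\<forall>i. strongly_relevant V E \<P> (s' i) (s' (Suc i)))"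
proof -
  define d where "d i = strongly_relevant V E \<P> (s i) (s (Suc i))" for i
  define x where "x i = (SOME y. y \<in> \<Union>N \<and> strongly_relevant V E \<P> (s i) y \<and>
      strongly_relevant V E \<P> y (s (Suc i)))" for i
  have X: "x i \<in> \<Union>N \<and> strongly_relevant V E \<P> (s i) (x i) \<and> strongly_relevant V E \<P> (x i) (s (Suc i))"
    if "\<not> d i" for i
  proof -
    have "d i \<or> (\<exists>y\<in>\<Union>N. strongly_relevant V E \<P> (s i) y \<and> strongly_relevant V E \<P> y (s (Suc i)))"
      unfolding d_def using key[OF assms(2-5)] assms(6-8) by blast
    then have "\<exists>y. y \<in> \<Union>N \<and> strongly_relevant V E \<P> (s i) y \<and> strongly_relevant V E \<P> y (s (Suc i))"
      using that by blast
    then show ?thesis unfolding x_def by (rule someI_ex)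
  qed
  define nx where "nx = (\<lambda>(i::nat, b::bool). if b then (Suc i, False) else if d i then (Suc i, False) else (i, True))"
  define st where "st n = (nx ^^ n) (0, False)" for n
  have stS: "st (Suc n) = nx (st n)" for n unfolding st_def by simp
  define s' where "s' n = (case st n of (i, b) \<Rightarrow> if b then x i else s i)" for n
  have inv: "st n = (i, True) \<Longrightarrow> \<not> d i" for n i
  proof (induction n arbitrary: i)
    case 0 then show ?case by (simp add: st_def)
  next
    case (Suc n)
    obtain j c where jc: "st n = (j, c)" by fastforce
    then show ?case using Suc.prems unfolding stS nx_def by (auto split: if_splits)
  qed
  have mem: "\<forall>n. s' n \<in> \<Union>N"
  proof
    fix n
    obtain i b where ib: "st n = (i, b)" by fastforce
    show "s' n \<in> \<Union>N"
    proof (cases b)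
      case True then show ?thesis using ib inv X unfolding s'_def by auto
    next
      case False then show ?thesis using ib assms(6) unfolding s'_def by auto
    qed
  qed
  have sr: "\<forall>n. strongly_relevant V E \<P> (s' n) (s' (Suc n))"
  proof
    fix n
    obtain i b where ib: "st n = (i, b)" by fastforce
    show "strongly_relevant V E \<P> (s' n) (s' (Suc n))"
    proof (cases b)
      case True
      then have "st (Suc n) = (Suc i, False)" using ib stS nx_def by simp
      then show ?thesis using ib inv[of n i] X[of i] True unfolding s'_def by auto
    next
      case False
      show ?thesis
      proof (cases "d i")
        case True
        then have "st (Suc n) = (Suc i, False)" using ib stS nx_def False by simp
        then show ?thesis using ib True False unfolding s'_def d_def by auto
      next
        case nd: False
        then have "st (Suc n) = (i, True)" using ib stS nx_def False by simp
        then show ?thesis using ib nd X[of i] False unfolding s'_def by auto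
      qed
    qed
  qed
  define f where "f = rec_nat 0 (\<lambda>i r. r + (if d i then 1 else 2::nat))"
  have f0: "f 0 = 0" and fS: "f (Suc i) = f i + (if d i then 1 else 2)" for i
    unfolding f_def by simp_all
  have stf: "st (f i) = (i, False)" for i
  proof (induction i)
    case 0 then show ?case by (simp add: f0 st_def)
  next
    case (Suc i)
    show ?case
    proof (cases "d i")
      case True
      then show ?thesis using Suc stS[of "f i"] unfolding fS nx_def by simp
    next
      case False
      then have "f (Suc i) = Suc (Suc (f i))" using fS by simp
      then show ?thesis using Suc stS[of "f i"] stS[of "Suc (f i)"] False unfolding nx_def by simp
    qed
  qed
  have smf: "strict_mono f" unfolding strict_mono_Suc_iff using fS by simp
  have "\<forall>i. s' (f i) = s i" using stf unfolding s'_def by simp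
  moreover have "\<forall>i. olt (s' i) (s' (Suc i))" using sr unfolding strongly_relevant_def by blast
  ultimately show ?thesis using mem sr smf by blast
qed
end
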